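(* There is a unique morphism of cosimplicial objects in $\mathsf{Cat}_\Delta$ \[ \varphi=(\varphi_n)_{n\ge 0}\colon \widetilde{\mathfrak C}[\Delta^\bullet]\to \Delta^\bullet_{\overline W} \] such that for every $n\ge 0$ the simplicial functor $\varphi_n\colon \widetilde{\mathfrak C}[\Delta^n]\to\Delta^n_{\overline W}$ is the identity on objects.
   Context: $\mathsf{Cat}_\Delta$ denotes the category of small simplicially enriched categories ("simplicial categories"); for a simplicial category $\mathcal C$ and objects $x,y$, $\mathcal C(x,y)$ is the simplicial set of maps and its $n$-simplices are called $n$-arrows. The cosimplicial simplicial category $\widetilde{\mathfrak C}[\Delta^\bullet]$: $\widetilde{\mathfrak C}[\Delta^n]$ has objects $0,\dots,n$; for $i\le j$, $\widetilde{\mathfrak C}[\Delta^n](i,j)=N(P_{i,j}^{\mathrm{op}})$, where $P_{i,j}$ is the poset of subsets $I\subseteq[n]$ with $\min I=i$, $\max I=j$, ordered by inclusion (so $P_{i,j}^{\mathrm{op}}$ is ordered by reverse inclusion), and the mapping simplicial set is empty if $i>j$; composition is induced by union of subsets. A poset map $\alpha\colon[p]\to[q]$ acts by $I\mapsto\alpha(I)$. The cosimplicial simplicial category $\Delta^\bullet_{\overline W}$: $\Delta^n_{\overline W}$ is the simplicial category freely generated by an $(n-i)$-arrow $g_{n,i}\colon i-1\to i$ for each $1\le i\le n$. Explicitly, its objects are $0,\dots,n$, and $\Delta^n_{\overline W}(i,j)=\prod_{n-j\le s<n-i}\Delta^s=\Delta^{n-j}\times\cdots\times\Delta^{n-i-1}$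 if $i\le j$ (the empty product being $\Delta^0$) and $\emptyset$ if $i>j$; composition $\Delta^n_{\overline W}(j,k)\times\Delta^n_{\overline W}(i,j)\to\Delta^n_{\overline W}(i,k)$ is the identity map of $\prod_{n-k\le s<n-i}\Delta^s$; $g_{n,i}$ is the top nondegenerate simplex of $\Delta^n_{\overline W}(i-1,i)=\Delta^{n-i}$. Coface maps $\partial_i\colon\Delta^{n-1}_{\overline W}\to\Delta^n_{\overline W}$ ($n\ge1$, $0\le i\le n$) are determined on generators by $\partial_i(g_{n-1,j})=d_{i-j}g_{n,j}$ if $j<i$ or $i=n$; $=g_{n,i-1}\circ d_0 g_{n,i}$ if $j=i<n$; $=g_{n,j+1}$ if $j>i$. Codegeneracy maps $\sigma_i\colon\Delta^{n+1}_{\overline W}\to\Delta^n_{\overline W}$ ($0\le i\le n$) are given by $\sigma_i(g_{n+1,j})=s_{i-j}g_{n,j}$ if $j\le i$; $=\mathrm{id}_i$ if $j=i+1$; $=g_{n,j-1}$ if $j>i+1$. Here $d_k,s_k$ are the simplicial face and degeneracy operators on arrows. *)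

theory Defs
  imports Main
begin

text \<open>A k-simplex of a nerve / of a standard simplex is represented by the list of its
  k+1 vertices (a monotone map [k] to the poset). The face d_i deletes entry i,
  the degeneracy s_i repeats entry i.\<close>

definition ldel :: "nat \<Rightarrow> 'a list \<Rightarrow> 'a list" where
  "ldel i xs = take i xs @ drop (Suc i) xs"

definition ldup :: "nat \<Rightarrow> 'a list \<Rightarrow> 'a list" where
  "ldup i xs = take (Suc i) xs @ drop i xs"

text \<open>sHom C x y k is the set of k-arrows x to y; sFace i / sDegen i are the simplicial
  operators d_i / s_i on arrows; sComp C x y z g f is the composite g o f of k-arrows;
  sId C x k is the (degenerate) identity k-arrow of x.\<close>

record ('o, 'a) scat =
  sObj :: "'o set"
  sHom :: "'o \<Rightarrow> 'o \<Rightarrow> nat \<Rightarrow> 'a set"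
  sFace :: "nat \<Rightarrow> 'a \<Rightarrow> 'a"
  sDegen :: "nat \<Rightarrow> 'a \<Rightarrow> 'a"
  sComp :: "'o \<Rightarrow> 'o \<Rightarrow> 'o \<Rightarrow> 'a \<Rightarrow> 'a \<Rightarrow> 'a"
  sId :: "'o \<Rightarrow> nat \<Rightarrow> 'a"

definition sfunctor ::
  "('o, 'a) scat \<Rightarrow> ('p, 'b) scat \<Rightarrow> ('o \<Rightarrow> 'p) \<Rightarrow> ('o \<Rightarrow> 'o \<Rightarrow> 'a \<Rightarrow> 'b) \<Rightarrow> bool" where
  "sfunctor C D Fo Fa \<longleftrightarrow>
     (\<forall>x\<in>sObj C. Fo x \<in> sObj D) \<and>
     (\<forall>x\<in>sObj C. \<forall>y\<in>sObj C. \<forall>k. \<forall>f\<in>sHom C x y k.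
        Fa x y f \<in> sHom D (Fo x) (Fo y) k) \<and>
     (\<forall>x\<in>sObj C. \<forall>y\<in>sObj C. \<forall>k. \<forall>f\<in>sHom C x y (Suc k). \<forall>i\<le>Suc k.
        Fa x y (sFace C i f) = sFace D i (Fa x y f)) \<and>
     (\<forall>x\<in>sObj C. \<forall>y\<in>sObj C. \<forall>k. \<forall>f\<in>sHom C x y k. \<forall>i\<le>k.
        Fa x y (sDegen C i f) = sDegen D i (Fa x y f)) \<and>
     (\<forall>x\<in>sObj C. \<forall>y\<in>sObj C. \<forall>z\<in>sObj C. \<forall>k. \<forall>f\<in>sHom C x y k. \<forall>g\<in>sHom C y z k.
        Fa x z (sComp C x y z g f) = sComp D (Fo x) (Fo y) (Fo z) (Fa y z g) (Fa x y f)) \<and>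
     (\<forall>x\<in>sObj C. \<forall>k. Fa x x (sId C x k) = sId D (Fo x) k)"

definition sfun_agree ::
  "('o, 'a) scat \<Rightarrow> ('o \<Rightarrow> 'p) \<Rightarrow> ('o \<Rightarrow> 'o \<Rightarrow> 'a \<Rightarrow> 'b)
     \<Rightarrow> ('o \<Rightarrow> 'p) \<Rightarrow> ('o \<Rightarrow> 'o \<Rightarrow> 'a \<Rightarrow> 'b) \<Rightarrow> bool" where
  "sfun_agree C Fo Fa Go Ga \<longleftrightarrow>
     (\<forall>x\<in>sObj C. Fo x = Go x) \<and>
     (\<forall>x\<in>sObj C. \<forall>y\<in>sObj C. \<forall>k. \<forall>f\<in>sHom C x y k. Fa x y f = Ga x y f)"

text \<open>cLev X n is X^n. (cCofO X n i, cCofA X n i) is the coface functor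
  d^i : X^(n-1) -> X^n (for 1 <= n, i <= n); (cCodO X n i, cCodA X n i) is the
  codegeneracy functor s^i : X^(n+1) -> X^n (for i <= n).\<close>

record ('o, 'a) cosimp =
  cLev :: "nat \<Rightarrow> ('o, 'a) scat"
  cCofO :: "nat \<Rightarrow> nat \<Rightarrow> 'o \<Rightarrow> 'o"
  cCofA :: "nat \<Rightarrow> nat \<Rightarrow> 'o \<Rightarrow> 'o \<Rightarrow> 'a \<Rightarrow> 'a"
  cCodO :: "nat \<Rightarrow> nat \<Rightarrow> 'o \<Rightarrow> 'o"
  cCodA :: "nat \<Rightarrow> nat \<Rightarrow> 'o \<Rightarrow> 'o \<Rightarrow> 'a \<Rightarrow> 'a"

definition cosimp_morphism ::
  "('o, 'a) cosimp \<Rightarrow> ('p, 'b) cosimp \<Rightarrow> (nat \<Rightarrow> 'o \<Rightarrow> 'p)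
     \<Rightarrow> (nat \<Rightarrow> 'o \<Rightarrow> 'o \<Rightarrow> 'a \<Rightarrow> 'b) \<Rightarrow> bool" where
  "cosimp_morphism X Y Po Pa \<longleftrightarrow>
     (\<forall>n. sfunctor (cLev X n) (cLev Y n) (Po n) (Pa n)) \<and>
     (\<forall>n i. 1 \<le> n \<and> i \<le> n \<longrightarrow>
        sfun_agree (cLev X (n - 1))
          (\<lambda>x. Po n (cCofO X n i x))
          (\<lambda>x y f. Pa n (cCofO X n i x) (cCofO X n i y) (cCofA X n i x y f))
          (\<lambda>x. cCofO Y n i (Po (n - 1) x))
          (\<lambda>x y f. cCofA Y n i (Po (n - 1) x) (Po (n - 1) y) (Pa (n - 1) x y f))) \<and>
     (\<forall>n i. i \<le> n \<longrightarrow>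
        sfun_agree (cLev X (Suc n))
          (\<lambda>x. Po n (cCodO X n i x))
          (\<lambda>x y f. Pa n (cCodO X n i x) (cCodO X n i y) (cCodA X n i x y f))
          (\<lambda>x. cCodO Y n i (Po (Suc n) x))
          (\<lambda>x y f. cCodA Y n i (Po (Suc n) x) (Po (Suc n) y) (Pa (Suc n) x y f)))"

definition cof_map :: "nat \<Rightarrow> nat \<Rightarrow> nat" where
  "cof_map i j = (if j < i then j else Suc j)"

definition codeg_map :: "nat \<Rightarrow> nat \<Rightarrow> nat" where
  "codeg_map i j = (if j \<le> i then j else j - 1)"

definition Psub :: "nat \<Rightarrow> nat \<Rightarrow> nat \<Rightarrow> nat set set" where
  "Psub n i j = {I. I \<subseteq> {0..n} \<and> I \<noteq> {} \<and> Min I = i \<and> Max I = j}"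

text \<open>k-simplices of N(P_{i,j}^op): chains I_0 >= ... >= I_k in reverse inclusion order.\<close>

definition Ct_hom :: "nat \<Rightarrow> nat \<Rightarrow> nat \<Rightarrow> nat \<Rightarrow> nat set list set" where
  "Ct_hom n i j k = (if i \<le> j then
     {Ls. length Ls = Suc k \<and> (\<forall>t<Suc k. Ls ! t \<in> Psub n i j) \<and>
          (\<forall>t<k. Ls ! Suc t \<subseteq> Ls ! t)}
   else {})"

definition Ct :: "nat \<Rightarrow> (nat, nat set list) scat" where
  "Ct n = \<lparr> sObj = {0..n}, sHom = Ct_hom n, sFace = ldel, sDegen = ldup,
            sComp = (\<lambda>_ _ _ g f. map2 (\<union>) g f),
            sId = (\<lambda>i k. replicate (Suc k) {i}) \<rparr>"

definition Ctilde :: "(nat, nat set list) cosimp" where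
  "Ctilde = \<lparr> cLev = Ct,
     cCofO = (\<lambda>n i. cof_map i),
     cCofA = (\<lambda>n i a b Ls. map (\<lambda>I. cof_map i ` I) Ls),
     cCodO = (\<lambda>n i. codeg_map i),
     cCodA = (\<lambda>n i a b Ls. map (\<lambda>I. codeg_map i ` I) Ls) \<rparr>"

definition simp_set :: "nat \<Rightarrow> nat \<Rightarrow> nat list set" where
  "simp_set s k = {L. length L = Suc k \<and> sorted L \<and> (\<forall>v\<in>set L. v \<le> s)}"

text \<open>A k-arrow i -> j of Delta^n_Wbar is a tuple in the product of Delta^s over
  n-j <= s < n-i, stored as a list whose position t is the factor s = n-j+t.
  Composition is then concatenation (identity of the product), identities are empty tuples.\<close>

definition DW_hom :: "nat \<Rightarrow> nat \<Rightarrow> nat \<Rightarrow> nat \<Rightarrow> nat list list set" where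
  "DW_hom n i j k = (if i \<le> j then
     {xs. length xs = j - i \<and> (\<forall>t<j - i. xs ! t \<in> simp_set (n - j + t) k)}
   else {})"

definition DWcat :: "nat \<Rightarrow> (nat, nat list list) scat" where
  "DWcat n = \<lparr> sObj = {0..n}, sHom = DW_hom n,
               sFace = (\<lambda>i. map (ldel i)), sDegen = (\<lambda>i. map (ldup i)),
               sComp = (\<lambda>_ _ _ g f. g @ f), sId = (\<lambda>_ _. []) \<rparr>"

definition topsimp :: "nat \<Rightarrow> nat list" where
  "topsimp s = [0..<Suc s]"

text \<open>The factor s of the tuple at position t of a k-arrow a -> b corresponds to
  the generator g_{m,b-t}; free_ext extends an assignment G of images of generators to
  all arrows of the freely generated simplicial category (x = theta^*(g) maps to
  theta^*(G g), composites to composites).\<close>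

definition gen_act :: "nat list list \<Rightarrow> nat list \<Rightarrow> nat list list" where
  "gen_act T \<theta> = map (\<lambda>L. map (nth L) \<theta>) T"

definition free_ext :: "(nat \<Rightarrow> nat list list) \<Rightarrow> nat \<Rightarrow> nat list list \<Rightarrow> nat list list" where
  "free_ext G b xs = concat (map (\<lambda>t. gen_act (G (b - t)) (xs ! t)) [0..<length xs])"

text \<open>Images of generators under the coface d^i : Delta^(n-1)_W -> Delta^n_W
  (generator g_{n-1,j}) and codegeneracy s^i : Delta^(n+1)_W -> Delta^n_W
  (generator g_{n+1,j}). The generator g_{n,j} is the one-factor tuple [topsimp (n-j)].\<close>

definition DW_cof_gen :: "nat \<Rightarrow> nat \<Rightarrow> nat \<Rightarrow> nat list list" where
  "DW_cof_gen n i j =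
     (if j < i then [ldel (i - j) (topsimp (n - j))]
      else if j = i then [topsimp (n - Suc i), ldel 0 (topsimp (n - i))]
      else [topsimp (n - Suc j)])"

definition DW_cod_gen :: "nat \<Rightarrow> nat \<Rightarrow> nat \<Rightarrow> nat list list" where
  "DW_cod_gen n i j =
     (if j \<le> i then [ldup (i - j) (topsimp (n - j))]
      else if j = Suc i then []
      else [topsimp (n - (j - 1))])"

definition DWbar :: "(nat, nat list list) cosimp" where
  "DWbar = \<lparr> cLev = DWcat,
     cCofO = (\<lambda>n i. cof_map i),
     cCofA = (\<lambda>n i a b xs. free_ext (DW_cof_gen n i) b xs),
     cCodO = (\<lambda>n i. codeg_map i),
     cCodA = (\<lambda>n i a b xs. free_ext (DW_cod_gen n i) b xs) \<rparr>"

end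

theory Submission imports Defs begin

definition vv :: "nat \<Rightarrow> nat set \<Rightarrow> nat" where
  "vv l I = Min {z\<in>I. l \<le> z} - l"

definition phiA :: "nat \<Rightarrow> nat \<Rightarrow> nat set list \<Rightarrow> nat list list" where
  "phiA x y f = map (\<lambda>l. map (vv l) f) (rev [Suc x..<Suc y])"

lemma Psub_D:
  assumes "I \<in> Psub n x y"
  shows "finite I" "I \<noteq> {}" "I \<subseteq> {0..n}" "Min I = x" "Max I = y" "x \<in> I" "y \<in> I"
    "\<And>z. z \<in> I \<Longrightarrow> x \<le> z \<and> z \<le> y" "x \<le> y" "y \<le> n"
proof -
  have f: "finite I" using assms unfolding Psub_def by (auto intro: finite_subset)
  have ne: "I \<noteq> {}" using assms unfolding Psub_def by auto
  show "finite I" "I \<noteq> {}" "I \<subseteq> {0..n}" "Min I = x" "Max I = y" using assms f unfolding Psub_def by auto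
  show xi: "x \<in> I" using assms f ne Min_in unfolding Psub_def by blast
  show yi: "y \<in> I" using assms f ne Max_in unfolding Psub_def by blast
  show "\<And>z. z \<in> I \<Longrightarrow> x \<le> z \<and> z \<le> y" using assms f unfolding Psub_def by auto
  then show "x \<le> y" using xi by blast
  show "y \<le> n" using yi assms unfolding Psub_def by auto
qed

lemma vv_props:
  assumes "finite I" "y \<in> I" "l \<le> y"
  shows "l \<le> Min {z\<in>I. l \<le> z}" "Min {z\<in>I. l \<le> z} \<le> y" "Min {z\<in>I. l \<le> z} \<in> I"
proof -
  have fin: "finite {z\<in>I. l \<le> z}" using assms by auto
  have ne: "y \<in> {z\<in>I. l \<le> z}" using assms by auto
  show "l \<le> Min {z\<in>I. l \<le> z}" using fin ne by (subst Min_ge_iff) auto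
  show "Min {z\<in>I. l \<le> z} \<le> y" using fin ne by auto
  have "Min {z\<in>I. l \<le> z} \<in> {z\<in>I. l \<le> z}" using fin ne Min_in by blast
  then show "Min {z\<in>I. l \<le> z} \<in> I" by auto
qed

lemma ldel_map: "ldel i (map g xs) = map g (ldel i xs)"
  unfolding ldel_def by (simp add: take_map drop_map)

lemma ldup_map: "ldup i (map g xs) = map g (ldup i xs)"
  unfolding ldup_def by (simp add: take_map drop_map)

lemma phiA_face: "phiA x y (ldel i f) = map (ldel i) (phiA x y f)"
  unfolding phiA_def by (simp add: ldel_map comp_def)

lemma phiA_degen: "phiA x y (ldup i f) = map (ldup i) (phiA x y f)"
  unfolding phiA_def by (simp add: ldup_map comp_def)

lemma rev_upt_nth: "t < y - x \<Longrightarrow> rev [Suc x..<Suc y] ! t = y - t"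
  by (simp add: rev_nth del: upt_Suc)

lemma Ct_hom_chain:
  assumes "\<forall>t<k. Ls ! Suc t \<subseteq> Ls ! t"
  shows "t + d \<le> k \<Longrightarrow> Ls ! (t + d) \<subseteq> Ls ! t"
proof (induction d)
  case 0 then show ?case by simp
next
  case (Suc d)
  then have "Ls ! (t + Suc d) \<subseteq> Ls ! (t + d)" using assms by simp
  then show ?case using Suc by auto
qed

lemma phiA_typed:
  assumes "f \<in> Ct_hom n x y k"
  shows "phiA x y f \<in> DW_hom n x y k"
proof -
  have xy: "x \<le> y" and len: "length f = Suc k" and P: "\<And>t. t < Suc k \<Longrightarrow> f ! t \<in> Psub n x y"
    and ch: "\<forall>t<k. f ! Suc t \<subseteq> f ! t"
    using assms unfolding Ct_hom_def by (auto split: if_splits)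
  have yn: "y \<le> n" using P[of 0] Psub_D(10) by auto
  have "phiA x y f ! t \<in> simp_set (n - y + t) k" if t: "t < y - x" for t
  proof -
    have e: "phiA x y f ! t = map (vv (y - t)) f" unfolding phiA_def using t by (simp add: rev_upt_nth del: upt_Suc)
    have b: "vv (y - t) I \<le> n - y + t" if "I \<in> set f" for I
    proof -
      obtain s where s: "s < Suc k" "I = f ! s" using \<open>I \<in> set f\<close> len by (metis in_set_conv_nth)
      have "I \<in> Psub n x y" using P s by simp
      then have "Min {z\<in>I. y - t \<le> z} \<le> y" using vv_props(2)[of I y "y-t"] Psub_D by auto
      then show ?thesis unfolding vv_def using yn by linarith
    qed
    have so: "sorted (map (vv (y - t)) f)"
      unfolding sorted_iff_nth_mono
    proof (intro allI impI)
      fix a b assume ab: "a \<le> b" "b < length (map (vv (y - t)) f)"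
      then have bk: "b \<le> k" using len by simp
      have sub: "f ! b \<subseteq> f ! a" using Ct_hom_chain[OF ch, of a "b - a"] ab bk by simp
      have Pb: "f ! b \<in> Psub n x y" using P bk by simp
      have Pa: "f ! a \<in> Psub n x y" using P ab bk by simp
      have "Min {z\<in>f ! a. y - t \<le> z} \<le> Min {z\<in>f ! b. y - t \<le> z}"
        apply (rule Min_antimono)
        using sub Psub_D[OF Pb] Psub_D[OF Pa] by auto
      then show "map (vv (y - t)) f ! a \<le> map (vv (y - t)) f ! b"
        using ab len unfolding vv_def by simp
    qed
    show ?thesis unfolding simp_set_def e using so b len by auto
  qed
  then show ?thesis unfolding DW_hom_def using xy by (simp add: phiA_def del: upt_Suc)
qed

lemma vv_Un_hi:
  assumes "finite G" "finite F" "\<forall>z\<in>F. z < l"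
  shows "vv l (G \<union> F) = vv l G"
proof -
  have "{z\<in>G \<union> F. l \<le> z} = {z\<in>G. l \<le> z}" using assms by auto
  then show ?thesis unfolding vv_def by simp
qed

lemma vv_Un_lo:
  assumes "finite G" "finite F" "\<forall>z\<in>G. y \<le> z" "y \<in> F" "l \<le> y" "G \<noteq> {}"
  shows "vv l (G \<union> F) = vv l F"
proof -
  have e: "{z\<in>G \<union> F. l \<le> z} = {z\<in>G. l \<le> z} \<union> {z\<in>F. l \<le> z}" by auto
  have neG: "{z\<in>G. l \<le> z} \<noteq> {}" using assms by force
  have neF: "{z\<in>F. l \<le> z} \<noteq> {}" using assms by force
  have m: "Min {z\<in>F. l \<le> z} \<le> Min {z\<in>G. l \<le> z}"
  proof -
    have "Min {z\<in>F. l \<le> z} \<le> y" using assms by (intro Min_le) auto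
    also have "y \<le> Min {z\<in>G. l \<le> z}" using assms neG by (subst Min_ge_iff) auto
    finally show ?thesis .
  qed
  show ?thesis unfolding vv_def e using assms neG neF m by (simp add: Min_Un)
qed

lemma phiA_comp:
  assumes f: "f \<in> Ct_hom n x y k" and g: "g \<in> Ct_hom n y z k"
  shows "phiA x z (map2 (\<union>) g f) = phiA y z g @ phiA x y f"
proof -
  have xy: "x \<le> y" and lenf: "length f = Suc k" and Pf: "\<And>t. t < Suc k \<Longrightarrow> f ! t \<in> Psub n x y"
    using f unfolding Ct_hom_def by (auto split: if_splits)
  have yz: "y \<le> z" and leng: "length g = Suc k" and Pg: "\<And>t. t < Suc k \<Longrightarrow> g ! t \<in> Psub n y z"
    using g unfolding Ct_hom_def by (auto split: if_splits)
  have r: "rev [Suc x..<Suc z] = rev [Suc y..<Suc z] @ rev [Suc x..<Suc y]"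
    using upt_add_eq_append[of "Suc x" "Suc y" "z - y"] xy yz by simp
  have hi: "map (vv l) (map2 (\<union>) g f) = map (vv l) g" if l: "l \<in> set (rev [Suc y..<Suc z])" for l
  proof (rule nth_equalityI)
    show "length (map (vv l) (map2 (\<union>) g f)) = length (map (vv l) g)" using lenf leng by simp
    fix t assume "t < length (map (vv l) (map2 (\<union>) g f))"
    then have t: "t < Suc k" using lenf leng by simp
    have "vv l (g ! t \<union> f ! t) = vv l (g ! t)"
      apply (rule vv_Un_hi)
      using Psub_D[OF Pf[OF t]] Psub_D[OF Pg[OF t]] l by force+
    then show "map (vv l) (map2 (\<union>) g f) ! t = map (vv l) g ! t" using t lenf leng by simp
  qed
  have lo: "map (vv l) (map2 (\<union>) g f) = map (vv l) f" if l: "l \<in> set (rev [Suc x..<Suc y])" for l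
  proof (rule nth_equalityI)
    show "length (map (vv l) (map2 (\<union>) g f)) = length (map (vv l) f)" using lenf leng by simp
    fix t assume "t < length (map (vv l) (map2 (\<union>) g f))"
    then have t: "t < Suc k" using lenf leng by simp
    have "vv l (g ! t \<union> f ! t) = vv l (f ! t)"
      apply (rule vv_Un_lo[where y=y])
      using Psub_D[OF Pf[OF t]] Psub_D[OF Pg[OF t]] l by force+
    then show "map (vv l) (map2 (\<union>) g f) ! t = map (vv l) f ! t" using t lenf leng by simp
  qed
  have 1: "map (\<lambda>l. map (vv l) (map2 (\<union>) g f)) (rev [Suc y..<Suc z]) = map (\<lambda>l. map (vv l) g) (rev [Suc y..<Suc z])"
    by (rule map_cong[OF refl hi])
  have 2: "map (\<lambda>l. map (vv l) (map2 (\<union>) g f)) (rev [Suc x..<Suc y]) = map (\<lambda>l. map (vv l) f) (rev [Suc x..<Suc y])"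
    by (rule map_cong[OF refl lo])
  show ?thesis unfolding phiA_def r map_append 1 2 by (rule refl)
qed

lemma phiA_id: "phiA x x f = []"
  unfolding phiA_def by simp

lemma phiA_sfunctor: "sfunctor (Ct n) (DWcat n) (\<lambda>x. x) phiA"
  unfolding sfunctor_def Ct_def DWcat_def
  by (auto simp: phiA_typed phiA_face phiA_degen phiA_comp phiA_id)

lemma free_ext_rev:
  assumes "x \<le> y"
  shows "free_ext G y (map h (rev [Suc x..<Suc y])) = concat (map (\<lambda>l. gen_act (G l) (h l)) (rev [Suc x..<Suc y]))"
proof -
  have "map (\<lambda>t. gen_act (G (y - t)) (map h (rev [Suc x..<Suc y]) ! t)) [0..<length (map h (rev [Suc x..<Suc y]))]
      = map (\<lambda>l. gen_act (G l) (h l)) (rev [Suc x..<Suc y])"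
  proof (rule nth_equalityI)
    fix t assume "t < length (map (\<lambda>t. gen_act (G (y - t)) (map h (rev [Suc x..<Suc y]) ! t)) [0..<length (map h (rev [Suc x..<Suc y]))])"
    then have t: "t < y - x" by (simp del: upt_Suc)
    then show "map (\<lambda>t. gen_act (G (y - t)) (map h (rev [Suc x..<Suc y]) ! t)) [0..<length (map h (rev [Suc x..<Suc y]))] ! t
      = map (\<lambda>l. gen_act (G l) (h l)) (rev [Suc x..<Suc y]) ! t"
      by (simp add: rev_upt_nth del: upt_Suc)
  qed (simp del: upt_Suc)
  then show ?thesis unfolding free_ext_def by simp
qed

lemma mono_cof: "mono (cof_map i)"
  unfolding mono_def cof_map_def by auto

lemma mono_codeg: "mono (codeg_map i)"
  unfolding mono_def codeg_map_def by auto

lemma vv_img: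
  assumes "mono h" "finite I" "\<And>z. l' \<le> h z \<longleftrightarrow> l \<le> z" "y \<in> I" "l \<le> y"
  shows "vv l' (h ` I) = h (Min {z\<in>I. l \<le> z}) - l'"
proof -
  have e: "{w \<in> h ` I. l' \<le> w} = h ` {z\<in>I. l \<le> z}" using assms(3) by auto
  have ne: "{z\<in>I. l \<le> z} \<noteq> {}" using assms by auto
  have "h (Min {z\<in>I. l \<le> z}) = Min (h ` {z\<in>I. l \<le> z})"
    by (rule mono_Min_commute[OF assms(1)]) (use assms ne in auto)
  then have "Min (h ` {z\<in>I. l \<le> z}) = h (Min {z\<in>I. l \<le> z})" by simp
  then show ?thesis unfolding vv_def e by simp
qed

lemma ldel_upt_nth:
  assumes "j < N" "m < N - 1"
  shows "ldel j [0..<N] ! m = (if m < j then m else Suc m)"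
proof -
  have "ldel j [0..<N] = [0..<j] @ [Suc j..<N]" unfolding ldel_def using assms by simp
  then show ?thesis using assms by (simp add: nth_append)
qed

lemma ldup_upt_nth:
  assumes "j < N" "m \<le> N"
  shows "ldup j [0..<N] ! m = (if m \<le> j then m else m - 1)"
proof -
  have "ldup j [0..<N] = [0..<Suc j] @ [j..<N]" unfolding ldup_def using assms by (simp add: min_def)
  then show ?thesis using assms by (simp add: nth_append)
qed

definition Lc :: "nat \<Rightarrow> nat \<Rightarrow> nat list" where
  "Lc i l = (if l < i then [l] else if l = i then [Suc i, i] else [Suc l])"

definition Lcd :: "nat \<Rightarrow> nat \<Rightarrow> nat list" where
  "Lcd i l = (if l \<le> i then [l] else if l = Suc i then [] else [l - 1])"

lemma Lc_list: "x \<le> y \<Longrightarrow> concat (map (Lc i) (rev [Suc x..<Suc y])) = rev [Suc (cof_map i x)..<Suc (cof_map i y)]"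
proof (induction y)
  case 0 then show ?case by simp
next
  case (Suc y)
  show ?case
  proof (cases "x = Suc y")
    case True then show ?thesis by simp
  next
    case False
    then have xy: "x \<le> y" using Suc by simp
    have IH: "concat (map (Lc i) (rev [Suc x..<Suc y])) = rev [Suc (cof_map i x)..<Suc (cof_map i y)]" using Suc xy by simp
    have cx: "cof_map i x \<le> cof_map i y" using mono_cof xy by (simp add: monoD)
    have "rev [Suc x..<Suc (Suc y)] = Suc y # rev [Suc x..<Suc y]" using xy by simp
    then have "concat (map (Lc i) (rev [Suc x..<Suc (Suc y)])) = Lc i (Suc y) @ rev [Suc (cof_map i x)..<Suc (cof_map i y)]"
      using IH by simp
    also have "\<dots> = rev [Suc (cof_map i x)..<Suc (cof_map i (Suc y))]"
      using cx unfolding Lc_def cof_map_def by (auto split: if_splits)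
    finally show ?thesis .
  qed
qed

lemma Lcd_list: "x \<le> y \<Longrightarrow> concat (map (Lcd i) (rev [Suc x..<Suc y])) = rev [Suc (codeg_map i x)..<Suc (codeg_map i y)]"
proof (induction y)
  case 0 then show ?case by simp
next
  case (Suc y)
  show ?case
  proof (cases "x = Suc y")
    case True then show ?thesis by simp
  next
    case False
    then have xy: "x \<le> y" using Suc by simp
    have IH: "concat (map (Lcd i) (rev [Suc x..<Suc y])) = rev [Suc (codeg_map i x)..<Suc (codeg_map i y)]" using Suc xy by simp
    have cx: "codeg_map i x \<le> codeg_map i y" using mono_codeg xy by (simp add: monoD)
    have "rev [Suc x..<Suc (Suc y)] = Suc y # rev [Suc x..<Suc y]" using xy by simp
    then have "concat (map (Lcd i) (rev [Suc x..<Suc (Suc y)])) = Lcd i (Suc y) @ rev [Suc (codeg_map i x)..<Suc (codeg_map i y)]"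
      using IH by simp
    also have "\<dots> = rev [Suc (codeg_map i x)..<Suc (codeg_map i (Suc y))]"
    proof (cases "Suc y \<le> i")
      case True
      then have "codeg_map i (Suc y) = Suc y" "codeg_map i y = y" "Lcd i (Suc y) = [Suc y]"
        unfolding codeg_map_def Lcd_def by auto
      then show ?thesis using cx by simp
    next
      case F1: False
      show ?thesis
      proof (cases "y = i")
        case True
        then have "codeg_map i (Suc y) = y" "codeg_map i y = y" "Lcd i (Suc y) = []"
          unfolding codeg_map_def Lcd_def by auto
        then show ?thesis by simp
      next
        case False
        then have yi: "i < y" using F1 by simp
        then have "codeg_map i (Suc y) = y" "codeg_map i y = y - 1" "Lcd i (Suc y) = [y]"
          unfolding codeg_map_def Lcd_def by auto
        moreover have "Suc (y - 1) = y" using yi by simp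
        ultimately show ?thesis using cx yi by simp
      qed
    qed
    finally show ?thesis .
  qed
qed

locale colctx =
  fixes I :: "nat set" and y l N :: nat
  assumes fin: "finite I" and yI: "y \<in> I" and ly: "l \<le> y" and bnd: "\<forall>z\<in>I. z \<le> N"
begin
definition "m0 = Min {z\<in>I. l \<le> z}"
lemma m0: "l \<le> m0" "m0 \<le> y" "m0 \<in> I" "m0 \<le> N" "vv l I = m0 - l"
  using vv_props[OF fin yI ly] bnd unfolding m0_def vv_def by auto
end

lemma cof_col_lt:
  assumes "colctx I y l (n - 1)" "l < i" "i \<le> n" "1 \<le> n"
  shows "ldel (i - l) (topsimp (n - l)) ! vv l I = vv l (cof_map i ` I)"
proof -
  interpret colctx I y l "n - 1" by fact
  have 1: "vv l (cof_map i ` I) = cof_map i m0 - l"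
    unfolding m0_def by (rule vv_img[OF mono_cof fin _ yI ly]) (use assms in \<open>auto simp: cof_map_def\<close>)
  have 2: "ldel (i - l) (topsimp (n - l)) ! (m0 - l) = (if m0 - l < i - l then m0 - l else Suc (m0 - l))"
    unfolding topsimp_def using m0 assms by (intro ldel_upt_nth) auto
  have ar: "cof_map i m0 - l = (if m0 - l < i - l then m0 - l else Suc (m0 - l))" using m0 assms by (auto simp: cof_map_def)
  show ?thesis by (simp only: m0(5) 1 2 ar)
qed

lemma cof_col_eq1:
  assumes "colctx I y l (n - 1)" "l = i" "i \<le> n" "1 \<le> n"
  shows "topsimp (n - Suc i) ! vv l I = vv (Suc l) (cof_map i ` I)"
proof -
  interpret colctx I y l "n - 1" by fact
  have 1: "vv (Suc l) (cof_map i ` I) = cof_map i m0 - Suc l"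
    unfolding m0_def by (rule vv_img[OF mono_cof fin _ yI ly]) (use assms in \<open>auto simp: cof_map_def\<close>)
  have 2: "topsimp (n - Suc i) ! (m0 - l) = m0 - l"
    unfolding topsimp_def using m0 assms by (subst nth_upt) auto
  have ar: "cof_map i m0 - Suc l = m0 - l" using m0 assms by (auto simp: cof_map_def)
  show ?thesis by (simp only: m0(5) 1 2 ar)
qed

lemma cof_col_eq2:
  assumes "colctx I y l (n - 1)" "l = i" "i \<le> n" "1 \<le> n"
  shows "ldel 0 (topsimp (n - i)) ! vv l I = vv l (cof_map i ` I)"
proof -
  interpret colctx I y l "n - 1" by fact
  have 1: "vv l (cof_map i ` I) = cof_map i m0 - l"
    unfolding m0_def by (rule vv_img[OF mono_cof fin _ yI ly]) (use assms in \<open>auto simp: cof_map_def\<close>)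
  have 2: "ldel 0 (topsimp (n - i)) ! (m0 - l) = (if m0 - l < 0 then m0 - l else Suc (m0 - l))"
    unfolding topsimp_def using m0 assms by (intro ldel_upt_nth) auto
  have ar: "cof_map i m0 - l = (if m0 - l < 0 then m0 - l else Suc (m0 - l))" using m0 assms by (auto simp: cof_map_def)
  show ?thesis by (simp only: m0(5) 1 2 ar)
qed

lemma cof_col_gt:
  assumes "colctx I y l (n - 1)" "i < l" "i \<le> n" "1 \<le> n"
  shows "topsimp (n - Suc l) ! vv l I = vv (Suc l) (cof_map i ` I)"
proof -
  interpret colctx I y l "n - 1" by fact
  have 1: "vv (Suc l) (cof_map i ` I) = cof_map i m0 - Suc l"
    unfolding m0_def by (rule vv_img[OF mono_cof fin _ yI ly]) (use assms in \<open>auto simp: cof_map_def\<close>)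
  have 2: "topsimp (n - Suc l) ! (m0 - l) = m0 - l"
    unfolding topsimp_def using m0 assms by (subst nth_upt) auto
  have ar: "cof_map i m0 - Suc l = m0 - l" using m0 assms by (auto simp: cof_map_def)
  show ?thesis by (simp only: m0(5) 1 2 ar)
qed

lemma cod_col_le:
  assumes "colctx I y l (Suc n)" "l \<le> i" "i \<le> n"
  shows "ldup (i - l) (topsimp (n - l)) ! vv l I = vv l (codeg_map i ` I)"
proof -
  interpret colctx I y l "Suc n" by fact
  have 1: "vv l (codeg_map i ` I) = codeg_map i m0 - l"
    unfolding m0_def by (rule vv_img[OF mono_codeg fin _ yI ly]) (use assms in \<open>auto simp: codeg_map_def\<close>)
  have 2: "ldup (i - l) (topsimp (n - l)) ! (m0 - l) = (if m0 - l \<le> i - l then m0 - l else m0 - l - 1)"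
    unfolding topsimp_def using m0 assms by (intro ldup_upt_nth) auto
  have ar: "codeg_map i m0 - l = (if m0 - l \<le> i - l then m0 - l else m0 - l - 1)" using m0 assms by (auto simp: codeg_map_def)
  show ?thesis by (simp only: m0(5) 1 2 ar)
qed

lemma cod_col_gt:
  assumes "colctx I y l (Suc n)" "Suc i < l" "i \<le> n"
  shows "topsimp (n - (l - 1)) ! vv l I = vv (l - 1) (codeg_map i ` I)"
proof -
  interpret colctx I y l "Suc n" by fact
  have 1: "vv (l - 1) (codeg_map i ` I) = codeg_map i m0 - (l - 1)"
    unfolding m0_def by (rule vv_img[OF mono_codeg fin _ yI ly]) (use assms in \<open>auto simp: codeg_map_def\<close>)
  have 2: "topsimp (n - (l - 1)) ! (m0 - l) = m0 - l"
    unfolding topsimp_def using m0 assms by (subst nth_upt) auto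
  have ar: "codeg_map i m0 - (l - 1) = m0 - l" using m0 assms by (auto simp: codeg_map_def)
  show ?thesis by (simp only: m0(5) 1 2 ar)
qed

lemma Ct_hom_D:
  assumes "f \<in> Ct_hom n x y k"
  shows "x \<le> y" "length f = Suc k" "\<And>I. I \<in> set f \<Longrightarrow> I \<in> Psub n x y"
    "\<And>t. t < Suc k \<Longrightarrow> f ! t \<in> Psub n x y" "\<forall>t<k. f ! Suc t \<subseteq> f ! t"
  using assms unfolding Ct_hom_def by (auto split: if_splits simp: in_set_conv_nth)

lemma Psub_colctx:
  assumes "I \<in> Psub n x y" "l \<le> y"
  shows "colctx I y l n"
  using Psub_D[OF assms(1)] assms(2) by unfold_locales auto

lemma phiA_cof:
  assumes n: "1 \<le> n" "i \<le> n" and f: "f \<in> Ct_hom (n - 1) x y k"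
  shows "phiA (cof_map i x) (cof_map i y) (map (\<lambda>I. cof_map i ` I) f) = free_ext (DW_cof_gen n i) y (phiA x y f)"
proof -
  note fD = Ct_hom_D[OF f]
  define F' where "F' = map (\<lambda>I. cof_map i ` I) f"
  have blk: "gen_act (DW_cof_gen n i l) (map (vv l) f) = map (\<lambda>l'. map (vv l') F') (Lc i l)"
    if l: "l \<in> set (rev [Suc x..<Suc y])" for l
  proof -
    have ly: "l \<le> y" using l by (simp only: set_rev set_upt) simp
    have ctx: "\<And>I. I \<in> set f \<Longrightarrow> colctx I y l (n - 1)" using Psub_colctx fD(3) ly by blast
    consider "l < i" | "l = i" | "i < l" by linarith
    then show ?thesis
    proof cases
      case 1
      have "\<forall>I\<in>set f. ldel (i - l) (topsimp (n - l)) ! vv l I = vv l (cof_map i ` I)"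
        using cof_col_lt[OF ctx 1 n(2) n(1)] by blast
      then show ?thesis using 1 unfolding gen_act_def DW_cof_gen_def Lc_def F'_def by simp
    next
      case 2
      have "\<forall>I\<in>set f. topsimp (n - Suc i) ! vv l I = vv (Suc l) (cof_map i ` I)"
        using cof_col_eq1[OF ctx 2 n(2) n(1)] by blast
      moreover have "\<forall>I\<in>set f. ldel 0 (topsimp (n - i)) ! vv l I = vv l (cof_map i ` I)"
        using cof_col_eq2[OF ctx 2 n(2) n(1)] by blast
      ultimately show ?thesis using 2 unfolding gen_act_def DW_cof_gen_def Lc_def F'_def by simp
    next
      case 3
      have "\<forall>I\<in>set f. topsimp (n - Suc l) ! vv l I = vv (Suc l) (cof_map i ` I)"
        using cof_col_gt[OF ctx 3 n(2) n(1)] by blast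
      then show ?thesis using 3 unfolding gen_act_def DW_cof_gen_def Lc_def F'_def by simp
    qed
  qed
  have "free_ext (DW_cof_gen n i) y (phiA x y f)
      = concat (map (\<lambda>l. gen_act (DW_cof_gen n i l) (map (vv l) f)) (rev [Suc x..<Suc y]))"
    unfolding phiA_def by (rule free_ext_rev[OF fD(1)])
  also have "\<dots> = concat (map (\<lambda>l. map (\<lambda>l'. map (vv l') F') (Lc i l)) (rev [Suc x..<Suc y]))"
    using blk by (metis (no_types, lifting) map_cong)
  also have "\<dots> = map (\<lambda>l'. map (vv l') F') (concat (map (Lc i) (rev [Suc x..<Suc y])))"
    by (simp add: map_concat comp_def del: upt_Suc)
  also have "\<dots> = phiA (cof_map i x) (cof_map i y) F'"
    unfolding phiA_def Lc_list[OF fD(1)] by simp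
  finally show ?thesis unfolding F'_def by simp
qed

lemma phiA_cod:
  assumes n: "i \<le> n" and f: "f \<in> Ct_hom (Suc n) x y k"
  shows "phiA (codeg_map i x) (codeg_map i y) (map (\<lambda>I. codeg_map i ` I) f) = free_ext (DW_cod_gen n i) y (phiA x y f)"
proof -
  note fD = Ct_hom_D[OF f]
  define F' where "F' = map (\<lambda>I. codeg_map i ` I) f"
  have blk: "gen_act (DW_cod_gen n i l) (map (vv l) f) = map (\<lambda>l'. map (vv l') F') (Lcd i l)"
    if l: "l \<in> set (rev [Suc x..<Suc y])" for l
  proof -
    have ly: "l \<le> y" using l by (simp only: set_rev set_upt) simp
    have ctx: "\<And>I. I \<in> set f \<Longrightarrow> colctx I y l (Suc n)" using Psub_colctx fD(3) ly by blast
    consider "l \<le> i" | "l = Suc i" | "Suc i < l" by linarith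
    then show ?thesis
    proof cases
      case 1
      have "\<forall>I\<in>set f. ldup (i - l) (topsimp (n - l)) ! vv l I = vv l (codeg_map i ` I)"
        using cod_col_le[OF ctx 1 n] by blast
      then show ?thesis using 1 unfolding gen_act_def DW_cod_gen_def Lcd_def F'_def by simp
    next
      case 2
      then show ?thesis unfolding gen_act_def DW_cod_gen_def Lcd_def F'_def by simp
    next
      case 3
      have "\<forall>I\<in>set f. topsimp (n - (l - 1)) ! vv l I = vv (l - 1) (codeg_map i ` I)"
        using cod_col_gt[OF ctx 3 n] by blast
      then show ?thesis using 3 unfolding gen_act_def DW_cod_gen_def Lcd_def F'_def by simp
    qed
  qed
  have "free_ext (DW_cod_gen n i) y (phiA x y f)
      = concat (map (\<lambda>l. gen_act (DW_cod_gen n i l) (map (vv l) f)) (rev [Suc x..<Suc y]))"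
    unfolding phiA_def by (rule free_ext_rev[OF fD(1)])
  also have "\<dots> = concat (map (\<lambda>l. map (\<lambda>l'. map (vv l') F') (Lcd i l)) (rev [Suc x..<Suc y]))"
    using blk by (metis (no_types, lifting) map_cong)
  also have "\<dots> = map (\<lambda>l'. map (vv l') F') (concat (map (Lcd i) (rev [Suc x..<Suc y])))"
    by (simp add: map_concat comp_def del: upt_Suc)
  also have "\<dots> = phiA (codeg_map i x) (codeg_map i y) F'"
    unfolding phiA_def Lcd_list[OF fD(1)] by simp
  finally show ?thesis unfolding F'_def by simp
qed

lemma pair_Psub: "a < b \<Longrightarrow> b \<le> m \<Longrightarrow> {a, b} \<in> Psub m a b"
  unfolding Psub_def by auto

lemma sing_Ct_hom: "I \<in> Psub m a b \<Longrightarrow> [I] \<in> Ct_hom m a b 0"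
  unfolding Ct_hom_def using Psub_D(9) by auto

lemma simp_set_00: "L \<in> simp_set 0 0 \<Longrightarrow> L = [0]"
  unfolding simp_set_def by (cases L) auto

lemma DW_hom_1010: "xs \<in> DW_hom 1 0 1 0 \<Longrightarrow> xs = [[0]]"
proof -
  assume "xs \<in> DW_hom 1 0 1 0"
  then have "length xs = 1" "xs ! 0 \<in> simp_set 0 0" unfolding DW_hom_def by auto
  then show "xs = [[0]]" using simp_set_00 by (cases xs) auto
qed

lemma cof_codeg: "c \<noteq> i \<Longrightarrow> cof_map i (codeg_map i c) = c"
  unfolding cof_map_def codeg_map_def by auto

lemma sf_typ: "sfunctor C D Fo Fa \<Longrightarrow> x\<in>sObj C \<Longrightarrow> y\<in>sObj C \<Longrightarrow> f\<in>sHom C x y k \<Longrightarrow> Fa x y f \<in> sHom D (Fo x) (Fo y) k"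
  unfolding sfunctor_def by auto
lemma sf_face: "sfunctor C D Fo Fa \<Longrightarrow> x\<in>sObj C \<Longrightarrow> y\<in>sObj C \<Longrightarrow> f\<in>sHom C x y (Suc k) \<Longrightarrow> i \<le> Suc k \<Longrightarrow> Fa x y (sFace C i f) = sFace D i (Fa x y f)"
  unfolding sfunctor_def by auto
lemma sf_comp: "sfunctor C D Fo Fa \<Longrightarrow> x\<in>sObj C \<Longrightarrow> y\<in>sObj C \<Longrightarrow> z\<in>sObj C \<Longrightarrow> f\<in>sHom C x y k \<Longrightarrow> g\<in>sHom C y z k \<Longrightarrow>
  Fa x z (sComp C x y z g f) = sComp D (Fo x) (Fo y) (Fo z) (Fa y z g) (Fa x y f)"
  unfolding sfunctor_def by auto
lemma sf_id: "sfunctor C D Fo Fa \<Longrightarrow> x\<in>sObj C \<Longrightarrow> Fa x x (sId C x k) = sId D (Fo x) k"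
  unfolding sfunctor_def by auto

context
  fixes Qo :: "nat \<Rightarrow> nat \<Rightarrow> nat" and Qa :: "nat \<Rightarrow> nat \<Rightarrow> nat \<Rightarrow> nat set list \<Rightarrow> nat list list"
  assumes mor: "cosimp_morphism Ctilde DWbar Qo Qa"
    and oid: "\<forall>n. \<forall>x\<in>sObj (cLev Ctilde n). Qo n x = x"
begin

lemma Qo_id: "x \<le> n \<Longrightarrow> Qo n x = x"
  using oid unfolding Ctilde_def Ct_def by auto

lemma Qfun: "sfunctor (Ct n) (DWcat n) (Qo n) (Qa n)"
  using mor unfolding cosimp_morphism_def Ctilde_def DWbar_def by simp

lemma Qcof:
  assumes "1 \<le> n" "i \<le> n" "x \<le> n - 1" "y \<le> n - 1" "f \<in> Ct_hom (n - 1) x y k"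
  shows "Qa n (cof_map i x) (cof_map i y) (map (\<lambda>I. cof_map i ` I) f) = free_ext (DW_cof_gen n i) y (Qa (n - 1) x y f)"
proof -
  have "sfun_agree (Ct (n - 1))
          (\<lambda>x. Qo n (cof_map i x))
          (\<lambda>x y f. Qa n (cof_map i x) (cof_map i y) (map (\<lambda>I. cof_map i ` I) f))
          (\<lambda>x. cof_map i (Qo (n - 1) x))
          (\<lambda>x y f. free_ext (DW_cof_gen n i) (Qo (n - 1) y) (Qa (n - 1) x y f))"
    using mor assms(1,2) unfolding cosimp_morphism_def Ctilde_def DWbar_def by simp
  then show ?thesis using assms Qo_id[of y "n - 1"] unfolding sfun_agree_def Ct_def by auto
qed

lemma Qpair: "a < b \<Longrightarrow> b \<le> n \<Longrightarrow> Qa n a b [{a, b}] = phiA a b [{a, b}]"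
proof (induction n arbitrary: a b)
  case 0 then show ?case by simp
next
  case (Suc n)
  show ?case
  proof (cases "n = 0")
    case True
    then have ab: "a = 0" "b = 1" using Suc by auto
    have "[{a,b}] \<in> Ct_hom (Suc n) a b 0" using Suc by (intro sing_Ct_hom pair_Psub) auto
    then have "Qa (Suc n) a b [{a,b}] \<in> DW_hom (Suc n) a b 0" "phiA a b [{a,b}] \<in> DW_hom (Suc n) a b 0"
      using Qfun[of "Suc n"] phiA_typed Suc unfolding sfunctor_def Ct_def DWcat_def
      by (auto simp: Qo_id)
    then show ?thesis using DW_hom_1010 True ab by (metis One_nat_def)
  next
    case False
    define i where "i = (if 0 < a then 0 else if b < Suc n then Suc n else 1)"
    have i: "i \<le> Suc n" "a \<noteq> i" "b \<noteq> i" using Suc False unfolding i_def by auto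
    define a' where "a' = codeg_map i a"
    define b' where "b' = codeg_map i b"
    have ca: "cof_map i a' = a" and cb: "cof_map i b' = b" using i cof_codeg unfolding a'_def b'_def by auto
    have ab': "a' < b'"
    proof (rule ccontr)
      assume "\<not> a' < b'"
      then have "cof_map i b' \<le> cof_map i a'" using mono_cof by (simp add: monoD)
      then show False using ca cb Suc by simp
    qed
    have b'n: "b' \<le> n" using i Suc unfolding b'_def codeg_map_def by auto
    have fh: "[{a',b'}] \<in> Ct_hom (Suc n - 1) a' b' 0" using ab' b'n by (simp add: sing_Ct_hom pair_Psub)
    have img: "map (\<lambda>I. cof_map i ` I) [{a',b'}] = [{a,b}]" using ca cb by simp
    have "Qa (Suc n) a b [{a,b}] = free_ext (DW_cof_gen (Suc n) i) b' (Qa n a' b' [{a',b'}])"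
      using Qcof[of "Suc n" i a' b' "[{a',b'}]" 0] fh i ab' b'n ca cb img by simp
    also have "\<dots> = free_ext (DW_cof_gen (Suc n) i) b' (phiA a' b' [{a',b'}])"
      using Suc.IH ab' b'n by simp
    also have "\<dots> = phiA a b [{a,b}]"
      using phiA_cof[of "Suc n" i "[{a',b'}]" a' b' 0] fh i ca cb img by simp
    finally show ?thesis .
  qed
qed


lemma Qvert: "card I = m \<Longrightarrow> I \<in> Psub n x y \<Longrightarrow> Qa n x y [I] = phiA x y [I]"
proof (induction m arbitrary: I x y rule: less_induct)
  case (less m)
  note P = Psub_D[OF less.prems(2)]
  have F: "sfunctor (Ct n) (DWcat n) (Qo n) (Qa n)" by (rule Qfun)
  show ?case
  proof (cases "x = y")
    case True
    then have "\<forall>z\<in>I. z = x" using P(8) by (simp add: le_antisym)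
    then have "I = {x}" using P(6) by blast
    then have "[I] = sId (Ct n) x 0" unfolding Ct_def by simp
    moreover have "x \<in> sObj (Ct n)" using P(9) P(10) unfolding Ct_def by simp
    ultimately have "Qa n x y [I] = []" using sf_id[OF F, of x 0] True unfolding DWcat_def by simp
    then show ?thesis using True by (simp add: phiA_id)
  next
    case False
    define I' where "I' = I - {y}"
    define y' where "y' = Max I'"
    have xI': "x \<in> I'" using P(6) False unfolding I'_def by auto
    have fI': "finite I'" using P(1) unfolding I'_def by auto
    have y'I': "y' \<in> I'" using xI' fI' Max_in unfolding y'_def by blast
    have "y' \<in> I" "y' \<noteq> y" using y'I' unfolding I'_def by auto
    then have y'y: "y' < y" using P(8) by (simp add: le_neq_implies_less)
    have xy': "x \<le> y'" using xI' fI' unfolding y'_def by simp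
    have PI': "I' \<in> Psub n x y'"
      unfolding Psub_def
    proof (intro CollectI conjI)
      show "I' \<subseteq> {0..n}" using P(3) unfolding I'_def by auto
      show "I' \<noteq> {}" using xI' by auto
      show "Min I' = x" using xI' fI' P(8) unfolding I'_def by (intro Min_eqI) auto
      show "Max I' = y'" unfolding y'_def ..
    qed
    have cI': "card I' < m" using less.prems(1) P(1) P(7) unfolding I'_def by (metis card_Diff1_less)
    have Iu: "I = {y', y} \<union> I'" using y'I' P(7) unfolding I'_def by auto
    have Pp: "{y', y} \<in> Psub n y' y" using y'y P(10) by (intro pair_Psub) auto
    have h1: "[{y', y}] \<in> Ct_hom n y' y 0" using Pp by (rule sing_Ct_hom)
    have h2: "[I'] \<in> Ct_hom n x y' 0" using PI' by (rule sing_Ct_hom)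
    have comp: "sComp (Ct n) x y' y [{y', y}] [I'] = [I]" using Iu unfolding Ct_def by simp
    have obj: "x \<in> sObj (Ct n)" "y' \<in> sObj (Ct n)" "y \<in> sObj (Ct n)" using P(10) y'y xy' unfolding Ct_def by auto
    have hh: "[I'] \<in> sHom (Ct n) x y' 0" "[{y', y}] \<in> sHom (Ct n) y' y 0" using h1 h2 unfolding Ct_def by auto
    have "Qa n x y (sComp (Ct n) x y' y [{y', y}] [I']) = sComp (DWcat n) (Qo n x) (Qo n y') (Qo n y) (Qa n y' y [{y', y}]) (Qa n x y' [I'])"
      by (rule sf_comp[OF F obj hh])
    then have "Qa n x y [I] = Qa n y' y [{y', y}] @ Qa n x y' [I']"
      using comp unfolding DWcat_def by simp
    also have "\<dots> = phiA y' y [{y', y}] @ phiA x y' [I']"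
      using Qpair[of y' y n] y'y P less.IH[OF cI' refl PI'] by simp
    also have "\<dots> = phiA x y (map2 (\<union>) [{y', y}] [I'])"
      using phiA_comp[OF h2 h1] by simp
    also have "\<dots> = phiA x y [I]" using Iu by simp
    finally show ?thesis .
  qed
qed

lemma det_list:
  assumes "length L = Suc (Suc k)" "length M = Suc (Suc k)"
    "ldel 0 L = ldel 0 M" "ldel (Suc k) L = ldel (Suc k) M"
  shows "L = M"
proof (rule nth_equalityI)
  show "length L = length M" using assms by simp
  fix t assume t: "t < length L"
  have d0: "drop 1 L = drop 1 M" using assms(3) unfolding ldel_def by simp
  have dk: "take (Suc k) L = take (Suc k) M" using assms unfolding ldel_def by simp
  show "L ! t = M ! t"
  proof (cases "t \<le> k")
    case True
    then have "L ! t = take (Suc k) L ! t" "M ! t = take (Suc k) M ! t" by simp_all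
    then show ?thesis using dk by simp
  next
    case False
    then have "t = Suc k" using t assms by simp
    moreover have "L ! Suc k = drop 1 L ! k" "M ! Suc k = drop 1 M ! k" using assms(1,2) by simp_all
    ultimately show ?thesis using d0 by simp
  qed
qed

lemma det_DW:
  assumes "xs \<in> DW_hom n x y (Suc k)" "ys \<in> DW_hom n x y (Suc k)"
    "map (ldel 0) xs = map (ldel 0) ys" "map (ldel (Suc k)) xs = map (ldel (Suc k)) ys"
  shows "xs = ys"
proof (rule nth_equalityI)
  have xy: "x \<le> y" using assms(1) unfolding DW_hom_def by (auto split: if_splits)
  show "length xs = length ys" using assms(1,2) xy unfolding DW_hom_def by simp
  fix t assume t: "t < length xs"
  have "length xs = y - x" using assms(1) xy unfolding DW_hom_def by simp
  then have "xs ! t \<in> simp_set (n - y + t) (Suc k)" "ys ! t \<in> simp_set (n - y + t) (Suc k)"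
    using assms(1,2) xy t unfolding DW_hom_def by auto
  then have l: "length (xs ! t) = Suc (Suc k)" "length (ys ! t) = Suc (Suc k)" unfolding simp_set_def by auto
  have "length ys = length xs" using assms(1,2) xy unfolding DW_hom_def by simp
  then have "ldel 0 (xs ! t) = ldel 0 (ys ! t)" "ldel (Suc k) (xs ! t) = ldel (Suc k) (ys ! t)"
    using assms(3,4) t by (metis nth_map)+
  then show "xs ! t = ys ! t" using det_list l by blast
qed

lemma ldel_Ct_hom:
  assumes "f \<in> Ct_hom n x y (Suc k)"
  shows "ldel 0 f \<in> Ct_hom n x y k" "ldel (Suc k) f \<in> Ct_hom n x y k"
proof -
  note D = Ct_hom_D[OF assms]
  have e0: "ldel 0 f = drop 1 f" unfolding ldel_def by simp
  have ek: "ldel (Suc k) f = take (Suc k) f" unfolding ldel_def using D(2) by simp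
  show "ldel 0 f \<in> Ct_hom n x y k" unfolding e0 Ct_hom_def using D by auto
  show "ldel (Suc k) f \<in> Ct_hom n x y k" unfolding ek Ct_hom_def using D by auto
qed

lemma Qall: "f \<in> Ct_hom n x y k \<Longrightarrow> Qa n x y f = phiA x y f"
proof (induction k arbitrary: f)
  case 0
  note D = Ct_hom_D[OF 0]
  then obtain I where "f = [I]" by (cases f) auto
  then show ?case using D Qvert by auto
next
  case (Suc k)
  note D = Ct_hom_D[OF Suc.prems]
  have F: "sfunctor (Ct n) (DWcat n) (Qo n) (Qa n)" by (rule Qfun)
  have yn: "y \<le> n" using D(4)[of 0] Psub_D(10) by auto
  have obj: "x \<in> sObj (Ct n)" "y \<in> sObj (Ct n)" using D(1) yn unfolding Ct_def by auto
  have fh: "f \<in> sHom (Ct n) x y (Suc k)" using Suc.prems unfolding Ct_def by simp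
  have face: "\<And>j. j \<le> Suc k \<Longrightarrow> Qa n x y (ldel j f) = map (ldel j) (Qa n x y f)"
    using sf_face[OF F obj fh] unfolding Ct_def DWcat_def by simp
  have "Qa n x y f \<in> sHom (DWcat n) (Qo n x) (Qo n y) (Suc k)" using sf_typ[OF F obj fh] .
  then have t1: "Qa n x y f \<in> DW_hom n x y (Suc k)"
    using Qo_id[of x n] Qo_id[of y n] yn D(1) unfolding DWcat_def by simp
  have t2: "phiA x y f \<in> DW_hom n x y (Suc k)" using phiA_typed Suc.prems by blast
  show ?case
  proof (rule det_DW[OF t1 t2])
    show "map (ldel 0) (Qa n x y f) = map (ldel 0) (phiA x y f)"
      using face[of 0] Suc.IH[OF ldel_Ct_hom(1)[OF Suc.prems]] phiA_face by simp
    show "map (ldel (Suc k)) (Qa n x y f) = map (ldel (Suc k)) (phiA x y f)"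
      using face[of "Suc k"] Suc.IH[OF ldel_Ct_hom(2)[OF Suc.prems]] phiA_face by simp
  qed
qed

end


theorem proposition3p3:
  shows "\<exists>Po Pa.
     (cosimp_morphism Ctilde DWbar Po Pa \<and> (\<forall>n. \<forall>x\<in>sObj (cLev Ctilde n). Po n x = x)) \<and>
     (\<forall>Qo Qa. cosimp_morphism Ctilde DWbar Qo Qa \<and> (\<forall>n. \<forall>x\<in>sObj (cLev Ctilde n). Qo n x = x)
        \<longrightarrow> (\<forall>n. sfun_agree (cLev Ctilde n) (Po n) (Pa n) (Qo n) (Qa n)))"
proof (intro exI conjI allI impI)
  show "cosimp_morphism Ctilde DWbar (\<lambda>n x. x) (\<lambda>n. phiA)"
    unfolding cosimp_morphism_def
  proof (intro conjI allI impI)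
    fix n show "sfunctor (cLev Ctilde n) (cLev DWbar n) (\<lambda>x. x) phiA"
      unfolding Ctilde_def DWbar_def using phiA_sfunctor by simp
  next
    fix n i :: nat assume a: "1 \<le> n \<and> i \<le> n"
    show "sfun_agree (cLev Ctilde (n - 1)) (\<lambda>x. cCofO Ctilde n i x)
          (\<lambda>x y f. phiA (cCofO Ctilde n i x) (cCofO Ctilde n i y) (cCofA Ctilde n i x y f))
          (\<lambda>x. cCofO DWbar n i x) (\<lambda>x y f. cCofA DWbar n i x y (phiA x y f))"
      unfolding sfun_agree_def Ctilde_def DWbar_def Ct_def using phiA_cof a by auto
  next
    fix n i :: nat assume a: "i \<le> n"
    show "sfun_agree (cLev Ctilde (Suc n)) (\<lambda>x. cCodO Ctilde n i x)
          (\<lambda>x y f. phiA (cCodO Ctilde n i x) (cCodO Ctilde n i y) (cCodA Ctilde n i x y f))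
          (\<lambda>x. cCodO DWbar n i x) (\<lambda>x y f. cCodA DWbar n i x y (phiA x y f))"
      unfolding sfun_agree_def Ctilde_def DWbar_def Ct_def using phiA_cod a by auto
  qed
next
  fix n show "\<forall>x\<in>sObj (cLev Ctilde n). x = x" by simp
next
  fix Qo Qa n
  assume q: "cosimp_morphism Ctilde DWbar Qo Qa \<and> (\<forall>n. \<forall>x\<in>sObj (cLev Ctilde n). Qo n x = x)"
  show "sfun_agree (cLev Ctilde n) (\<lambda>x. x) phiA (Qo n) (Qa n)"
    unfolding sfun_agree_def
  proof (intro conjI ballI allI)
    fix x assume "x \<in> sObj (cLev Ctilde n)"
    then show "x = Qo n x" using q by simp
  next
    fix x y k f assume "x \<in> sObj (cLev Ctilde n)" "y \<in> sObj (cLev Ctilde n)" "f \<in> sHom (cLev Ctilde n) x y k"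
    then have "f \<in> Ct_hom n x y k" unfolding Ctilde_def Ct_def by simp
    then show "phiA x y f = Qa n x y f" using Qall[of Qo Qa] q by metis
  qed
qed

end
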